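(* Let $(\mathcal X,\rho)$ be a non-empty Polish metric space with Borel $\sigma$-field $\mathfrak B(\mathcal X)$, and let $\mathcal Y\in\mathfrak B(\mathcal X)$ satisfy the entropy condition $$c_{x,0}\,s^{-\gamma}\le \log \mathcal N_{\mathcal X}(s,\mathcal Y,\rho)\le c_{x,1}\,s^{-\gamma}\qquad\text{for all } s\in(0,s_0),$$ for some constants $s_0>0$, $0<c_{x,0}<c_{x,1}$, $\gamma>0$. Fix $C>0$ and $\beta\in(0,1]$, and let $\mathcal G=\mathcal G_{\beta,C}$ be the class of all Borel measurable $g:\mathcal X\to\mathbb R$ with $\sup_{y\in\mathcal Y}|g(y)|\le C$ and $|g(y)-g(z)|\le C\rho(y,z)^\beta$ for all $y,z\in\mathcal Y$. For each $n$, observe $(X_1,Y_1),\dots,(X_n,Y_n)$ with $Y_j=g(X_j)+\varepsilon_j$, where $g\in\mathcal G$, the pairs $(X_1,\varepsilon_1),\dots,(X_n,\varepsilon_n)$ are i.i.d., the $X_j$ take values in $\mathcal X$ with law $P_{X,n}$ on $\mathfrak B(\mathcal X)$ satisfying $P_{X,n}(\mathcal Y)=1$, the $\varepsilon_j$ are real-valued, and $E(\varepsilon_1\mid X_1)=0$ and $\operatorname{var}(\varepsilon_1\mid X_1)\le c_v$ almost surely, for a constant $c_v$. Define, with $K=1_{[0,1)}$ and $K_h:=K(\cdot/h)$, $$\hat A(x)=\frac1n\sum_{j=1}^n Y_jK_h(\rho(x,X_j)),\quad \hat B(x)=\frac1n\sum_{j=1}^n K_h(\rho(x,X_j)),\quad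 \hat g(x)=\begin{cases}\hat A(x)/\hat B(x),&\hat B(x)>\delta_n,\\ 0,&\text{otherwise},\end{cases}$$ where $\delta_n=n^{-\eta}$ with $\eta\in(0,1/2)$ and $h=\{d\log n\}^{-1/\gamma}$ with $d\in(0,\eta\, c_{x,1}^{-1}4^{-\gamma})$. Then for any sequence $\{P_{X,n}\}_n$ of such design measures, $$\sup_{g\in\mathcal G}\int E|\hat g(x)-g(x)|^2\,\mathrm dP_{X,n}(x)=\mathcal O\big(\{\log n\}^{-2\beta/\gamma}\big)\quad (n\to\infty).$$
   Context: $\mathcal N_{\mathcal X}(\delta,\mathcal Y,\rho)$ denotes the covering number: the minimal number of open $\rho$-balls in $\mathcal X$ of radius $\delta$ whose union contains $\mathcal Y$. A Polish metric space is a separable complete metric space. The expectation $E$ is over the data $(X_j,Y_j)_{j\le n}$ for fixed $x$. *)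

theory Defs
  imports "HOL-Probability.Probability"
begin

text \<open>Covering number N_X(delta, Y, rho): minimal number of open balls of radius delta,
  with centres in the whole space X (the type), whose union contains Y; infinity if no
  finite cover exists.\<close>
definition covering_number :: "real \<Rightarrow> 'a::metric_space set \<Rightarrow> enat" where
  "covering_number \<delta> Y = Inf {enat (card C) | C. finite C \<and> Y \<subseteq> (\<Union>c\<in>C. ball c \<delta>)}"

definition hoelder_class :: "'a::metric_space set \<Rightarrow> real \<Rightarrow> real \<Rightarrow> ('a \<Rightarrow> real) set" where
  "hoelder_class Y \<beta> C = {g. g \<in> borel_measurable borel \<and>
      (\<forall>y\<in>Y. \<bar>g y\<bar> \<le> C) \<and>
      (\<forall>y\<in>Y. \<forall>z\<in>Y. \<bar>g y - g z\<bar> \<le> C * dist y z powr \<beta>)}"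

definition Kh :: "real \<Rightarrow> real \<Rightarrow> real" where
  "Kh h r = indicator {0..<1} (r / h)"

text \<open>Data omega j = (X_j, eps_j); responses Y_j = g X_j + eps_j.\<close>
definition A_hat :: "nat \<Rightarrow> real \<Rightarrow> ('a::metric_space \<Rightarrow> real) \<Rightarrow> (nat \<Rightarrow> 'a \<times> real) \<Rightarrow> 'a \<Rightarrow> real" where
  "A_hat n h g \<omega> x = (1 / real n) * (\<Sum>j<n. (g (fst (\<omega> j)) + snd (\<omega> j)) * Kh h (dist x (fst (\<omega> j))))"

definition B_hat :: "nat \<Rightarrow> real \<Rightarrow> (nat \<Rightarrow> 'a::metric_space \<times> real) \<Rightarrow> 'a \<Rightarrow> real" where
  "B_hat n h \<omega> x = (1 / real n) * (\<Sum>j<n. Kh h (dist x (fst (\<omega> j))))"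

definition g_hat :: "nat \<Rightarrow> real \<Rightarrow> real \<Rightarrow> ('a::metric_space \<Rightarrow> real) \<Rightarrow> (nat \<Rightarrow> 'a \<times> real) \<Rightarrow> 'a \<Rightarrow> real" where
  "g_hat n h \<delta> g \<omega> x = (if B_hat n h \<omega> x > \<delta> then A_hat n h g \<omega> x / B_hat n h \<omega> x else 0)"

text \<open>Integrated mean squared error: int E|g_hat(x) - g(x)|^2 dP_X(x), where the expectation
  is w.r.t. the n-fold product of the law Q of (X_1, eps_1).\<close>
definition risk :: "nat \<Rightarrow> real \<Rightarrow> real \<Rightarrow> ('a::metric_space \<times> real) measure \<Rightarrow> ('a \<Rightarrow> real) \<Rightarrow> ennreal" where
  "risk n h \<delta> Q g = (\<integral>\<^sup>+ x. (\<integral>\<^sup>+ \<omega>. ennreal ((g_hat n h \<delta> g \<omega> x - g x)\<^sup>2) \<partial>(PiM {..<n} (\<lambda>_. Q))) \<partial>(distr Q borel fst))"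

end

theory Submission
  imports Defs "HOL-Real_Asymp.Real_Asymp"
begin



lemma sum_sq_PiM:
  fixes Q :: "'b measure" and f :: "'b \<Rightarrow> real"
  assumes Q: "prob_space Q" and fm: "f \<in> borel_measurable Q"
    and f2: "integrable Q (\<lambda>z. (f z)\<^sup>2)" and f0: "(\<integral>z. f z \<partial>Q) = 0"
  shows "integrable (PiM {..<n} (\<lambda>_. Q)) (\<lambda>\<omega>. (\<Sum>j<n. f (\<omega> j))\<^sup>2)"
    "(\<integral>\<omega>. (\<Sum>j<n. f (\<omega> j))\<^sup>2 \<partial>PiM {..<n} (\<lambda>_. Q)) = real n * (\<integral>z. (f z)\<^sup>2 \<partial>Q)"
proof -
  interpret Q: prob_space Q by fact
  interpret PS: product_sigma_finite "\<lambda>_. Q"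
    by (simp add: product_sigma_finite_def Q.sigma_finite_measure_axioms)
  have fi: "integrable Q f"
    by (rule Q.square_integrable_imp_integrable[OF fm f2])
  define F where "F i j = (\<lambda>k z. (if k = i then f z else 1) * (if k = j then f z else (1::real)))" for i j :: nat
  have Fint: "integrable Q (F i j k)" for i j k
    using fi f2 by (cases "k = i"; cases "k = j") (auto simp: F_def power2_eq_square Q.prob_space)
  have Fprod: "(\<Prod>k<n. F i j k (\<omega> k)) = f (\<omega> i) * f (\<omega> j)" if "i < n" "j < n" for i j \<omega>
    using that by (simp add: F_def prod.distrib)
  have Fintg: "(\<Prod>k<n. integral\<^sup>L Q (F i j k)) = (if i = j then (\<integral>z. (f z)\<^sup>2 \<partial>Q) else 0)"
    if "i < n" "j < n" for i j
  proof (cases "i = j")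
    case True
    have "(\<Prod>k<n. integral\<^sup>L Q (F i j k)) = (\<Prod>k<n. if k = i then (\<integral>z. (f z)\<^sup>2 \<partial>Q) else 1)"
      using True by (intro prod.cong) (auto simp: F_def power2_eq_square Q.prob_space)
    also have "\<dots> = (\<integral>z. (f z)\<^sup>2 \<partial>Q)" using that by simp
    finally show ?thesis using True by simp
  next
    case False
    have "integral\<^sup>L Q (F i j i) = 0" using False f0 by (simp add: F_def)
    then show ?thesis using False that by (auto intro!: prod_zero)
  qed
  have cint: "integrable (PiM {..<n} (\<lambda>_. Q)) (\<lambda>\<omega>. f (\<omega> i) * f (\<omega> j))" if "i < n" "j < n" for i j
    using PS.product_integrable_prod[of "{..<n}" "F i j"] Fint Fprod[OF that] by simp
  have cval: "(\<integral>\<omega>. f (\<omega> i) * f (\<omega> j) \<partial>PiM {..<n} (\<lambda>_. Q)) = (if i = j then (\<integral>z. (f z)\<^sup>2 \<partial>Q) else 0)"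
    if "i < n" "j < n" for i j
    using PS.product_integral_prod[of "{..<n}" "F i j"] Fint Fprod[OF that] Fintg[OF that] by simp
  have eq: "(\<Sum>j<n. f (\<omega> j))\<^sup>2 = (\<Sum>i<n. \<Sum>j<n. f (\<omega> i) * f (\<omega> j))" for \<omega>
    by (simp add: power2_eq_square sum_product)
  show "integrable (PiM {..<n} (\<lambda>_. Q)) (\<lambda>\<omega>. (\<Sum>j<n. f (\<omega> j))\<^sup>2)"
    unfolding eq by (intro Bochner_Integration.integrable_sum cint) auto
  have "(\<integral>\<omega>. (\<Sum>j<n. f (\<omega> j))\<^sup>2 \<partial>PiM {..<n} (\<lambda>_. Q))
      = (\<Sum>i<n. \<Sum>j<n. (\<integral>\<omega>. f (\<omega> i) * f (\<omega> j) \<partial>PiM {..<n} (\<lambda>_. Q)))"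
    unfolding eq
    apply (subst Bochner_Integration.integral_sum)
     apply (intro Bochner_Integration.integrable_sum cint; simp)
    apply (intro sum.cong refl)
    apply (subst Bochner_Integration.integral_sum)
     apply (intro cint; simp)
    apply simp
    done
  also have "\<dots> = (\<Sum>i<n. \<Sum>j<n. (if i = j then (\<integral>z. (f z)\<^sup>2 \<partial>Q) else 0))"
    by (intro sum.cong refl) (simp add: cval)
  also have "\<dots> = real n * (\<integral>z. (f z)\<^sup>2 \<partial>Q)" by simp
  finally show "(\<integral>\<omega>. (\<Sum>j<n. f (\<omega> j))\<^sup>2 \<partial>PiM {..<n} (\<lambda>_. Q)) = real n * (\<integral>z. (f z)\<^sup>2 \<partial>Q)" .
qed


lemma fst_snd_meas:
  fixes Q :: "('a::polish_space \<times> real) measure"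
  assumes "sets Q = sets borel"
  shows "fst \<in> borel_measurable Q" "snd \<in> borel_measurable Q"
  using assms by (simp_all add: measurable_cong_sets[OF assms refl] borel_measurable_continuous_onI
      continuous_on_fst continuous_on_snd continuous_on_id)

lemma noise_facts:
  fixes Q :: "('a::polish_space \<times> real) measure" and \<phi> :: "'a \<Rightarrow> real"
  assumes Q: "prob_space Q" and Qs: "sets Q = sets borel"
    and sq: "integrable Q (\<lambda>z. (snd z)\<^sup>2)"
    and mean: "AE z in Q. real_cond_exp Q (vimage_algebra (space Q) fst borel) snd z = 0"
    and var: "AE z in Q. real_cond_exp Q (vimage_algebra (space Q) fst borel) (\<lambda>z. (snd z)\<^sup>2) z
          - (real_cond_exp Q (vimage_algebra (space Q) fst borel) snd z)\<^sup>2 \<le> cv"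
    and \<phi>m: "\<phi> \<in> borel_measurable borel" and \<phi>b: "\<And>x. \<bar>\<phi> x\<bar> \<le> 1"
  shows "(\<integral>z. snd z * \<phi> (fst z) \<partial>Q) = 0" "(\<integral>z. (snd z)\<^sup>2 \<partial>Q) \<le> cv"
proof -
  interpret Q: prob_space Q by fact
  define F where "F = vimage_algebra (space Q) fst borel"
  note meas = fst_snd_meas[OF Qs]
  have sub: "subalgebra Q F"
    unfolding subalgebra_def F_def
    using sets_image_in_sets[OF refl meas(1)] by simp
  interpret FS: finite_measure_subalgebra Q F
    by unfold_locales (fact sub)
  have sndi: "integrable Q snd"
    by (rule Q.square_integrable_imp_integrable[OF meas(2) sq])
  have phiF: "(\<lambda>z. \<phi> (fst z)) \<in> borel_measurable F"
    unfolding F_def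
    by (rule measurable_compose[OF measurable_vimage_algebra1 \<phi>m]) auto
  have phiQ: "(\<lambda>z. \<phi> (fst z)) \<in> borel_measurable Q"
    using measurable_compose[OF meas(1) \<phi>m] .
  have int1: "integrable Q (\<lambda>z. \<phi> (fst z) * snd z)"
    by (rule Bochner_Integration.integrable_bound[OF sndi])
       (use phiQ meas in \<open>auto intro!: mult_left_le_one_le simp: abs_mult \<phi>b\<close>)
  have "(\<integral>z. \<phi> (fst z) * snd z \<partial>Q) = (\<integral>z. \<phi> (fst z) * real_cond_exp Q F snd z \<partial>Q)"
    using FS.real_cond_exp_intg(2)[OF int1 phiF meas(2)] by simp
  also have "\<dots> = (\<integral>z. 0 \<partial>Q)"
    apply (rule integral_cong_AE)
    using phiQ FS.real_cond_exp_F_meas measurable_from_subalg[OF sub] apply (auto)[2]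
    using mean unfolding F_def by eventually_elim simp
  finally show "(\<integral>z. snd z * \<phi> (fst z) \<partial>Q) = 0" by (simp add: mult.commute)
  have ce2: "integrable Q (real_cond_exp Q F (\<lambda>z. (snd z)\<^sup>2))"
    using FS.real_cond_exp_int(1)[OF sq] .
  have "(\<integral>z. (snd z)\<^sup>2 \<partial>Q) = (\<integral>z. real_cond_exp Q F (\<lambda>z. (snd z)\<^sup>2) z \<partial>Q)"
    using FS.real_cond_exp_int(2)[OF sq] by simp
  also have "\<dots> \<le> (\<integral>z. cv \<partial>Q)"
    apply (rule integral_mono_AE[OF ce2])
     apply simp
    using mean var unfolding F_def by eventually_elim simp
  also have "\<dots> = cv" by (simp add: Q.prob_space)
  finally show "(\<integral>z. (snd z)\<^sup>2 \<partial>Q) \<le> cv" .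
qed


lemma Kh_ball: "h > 0 \<Longrightarrow> Kh h (dist x y) = indicator (ball x h) y"
  by (simp add: Kh_def indicator_def divide_less_eq)

lemma pointwise_bound:
  fixes \<omega> :: "nat \<Rightarrow> 'a::metric_space \<times> real"
  assumes n: "n > 0" and h: "h > 0" and \<delta>: "\<delta> > 0" and \<beta>: "\<beta> > 0" and C: "C > 0"
    and x: "x \<in> Y" and XY: "\<And>j. j < n \<Longrightarrow> fst (\<omega> j) \<in> Y"
    and gb: "\<forall>y\<in>Y. \<bar>g y\<bar> \<le> C" and gh: "\<forall>y\<in>Y. \<forall>z\<in>Y. \<bar>g y - g z\<bar> \<le> C * dist y z powr \<beta>"
  shows "(g_hat n h \<delta> g \<omega> x - g x)\<^sup>2 \<le> 2 * C\<^sup>2 * (h powr \<beta>)\<^sup>2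
      + 2 / (real n * \<delta>)\<^sup>2 * (\<Sum>j<n. snd (\<omega> j) * indicator (ball x h) (fst (\<omega> j)))\<^sup>2
      + C\<^sup>2 * indicator {..\<delta>} (B_hat n h \<omega> x)"
proof -
  define K where "K j = (indicator (ball x h) (fst (\<omega> j)) :: real)" for j
  define m where "m = (\<Sum>j<n. K j)"
  define S where "S = (\<Sum>j<n. snd (\<omega> j) * K j)"
  define T where "T = (\<Sum>j<n. (g (fst (\<omega> j)) - g x) * K j)"
  have K01: "K j = 0 \<or> K j = 1" for j by (simp add: K_def indicator_def)
  have B: "B_hat n h \<omega> x = m / real n"
    by (simp add: B_hat_def m_def K_def Kh_ball[OF h])
  have "(\<Sum>j<n. (g (fst (\<omega> j)) + snd (\<omega> j)) * K j)
      = (\<Sum>j<n. g x * K j + (g (fst (\<omega> j)) - g x) * K j + snd (\<omega> j) * K j)"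
    by (intro sum.cong) (simp_all add: algebra_simps)
  also have "\<dots> = g x * m + T + S"
    by (simp add: sum.distrib m_def T_def S_def sum_distrib_left)
  finally have A0: "(\<Sum>j<n. (g (fst (\<omega> j)) + snd (\<omega> j)) * K j) = g x * m + T + S" .
  have A: "A_hat n h g \<omega> x = (g x * m + T + S) / real n"
    unfolding A_hat_def Kh_ball[OF h] using A0 by (simp add: K_def)
  have m0: "m \<ge> 0" unfolding m_def using K01 by (intro sum_nonneg) (metis order_refl zero_le_one)
  have Tb: "\<bar>T\<bar> \<le> C * h powr \<beta> * m"
  proof -
    have "\<bar>T\<bar> \<le> (\<Sum>j<n. \<bar>(g (fst (\<omega> j)) - g x) * K j\<bar>)" unfolding T_def by (rule sum_abs)
    also have "\<dots> \<le> (\<Sum>j<n. C * h powr \<beta> * K j)"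
    proof (intro sum_mono)
      fix j assume "j \<in> {..<n}"
      then have Xj: "fst (\<omega> j) \<in> Y" using XY by simp
      show "\<bar>(g (fst (\<omega> j)) - g x) * K j\<bar> \<le> C * h powr \<beta> * K j"
      proof (cases "K j = 1")
        case True
        then have d: "dist x (fst (\<omega> j)) < h" by (simp add: K_def indicator_def split: if_splits)
        have "\<bar>g (fst (\<omega> j)) - g x\<bar> \<le> C * dist (fst (\<omega> j)) x powr \<beta>" using gh Xj x by blast
        also have "\<dots> \<le> C * h powr \<beta>"
          using d C \<beta> by (intro mult_left_mono powr_mono2) (auto simp: dist_commute)
        finally show ?thesis using True by simp
      next
        case False then have "K j = 0" using K01 by auto
        then show ?thesis by simp
      qed
    qed
    also have "\<dots> = C * h powr \<beta> * m" by (simp add: m_def sum_distrib_left)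
    finally show ?thesis .
  qed
  have gx: "(g x)\<^sup>2 \<le> C\<^sup>2" using gb x by (metis abs_le_square_iff abs_of_pos C)
  have nn1: "0 \<le> 2 * C\<^sup>2 * (h powr \<beta>)\<^sup>2" by simp
  have nn2: "0 \<le> 2 / (real n * \<delta>)\<^sup>2 * S\<^sup>2" by simp
  show ?thesis
  proof (cases "B_hat n h \<omega> x > \<delta>")
    case True
    then have mpos: "m > real n * \<delta>" using B n by (simp add: field_simps)
    then have mp: "m > 0" using n \<delta> by (meson less_trans mult_pos_pos of_nat_0_less_iff)
    have "g_hat n h \<delta> g \<omega> x - g x = (T + S) / m"
      using True mp n unfolding g_hat_def A B by (simp add: field_simps)
    then have "(g_hat n h \<delta> g \<omega> x - g x)\<^sup>2 = (T + S)\<^sup>2 / m\<^sup>2" by (simp add: power_divide)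
    also have "\<dots> \<le> (2 * T\<^sup>2 + 2 * S\<^sup>2) / m\<^sup>2"
    proof (intro divide_right_mono)
      have "0 \<le> (T - S)\<^sup>2" by simp
      then show "(T + S)\<^sup>2 \<le> 2 * T\<^sup>2 + 2 * S\<^sup>2" by (simp add: power2_eq_square algebra_simps)
    qed simp
    also have "\<dots> = 2 * (T / m)\<^sup>2 + 2 * S\<^sup>2 / m\<^sup>2" by (simp only: power_divide add_divide_distrib times_divide_eq_right)
    also have "\<dots> \<le> 2 * (C * h powr \<beta>)\<^sup>2 + 2 * S\<^sup>2 / (real n * \<delta>)\<^sup>2"
    proof -
      have "\<bar>T / m\<bar> = \<bar>T\<bar> / m" using mp by simp
      also have "\<dots> \<le> C * h powr \<beta>" using Tb mp by (simp add: pos_divide_le_eq)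
      also have "\<dots> = \<bar>C * h powr \<beta>\<bar>" using C by simp
      finally have 1: "(T / m)\<^sup>2 \<le> (C * h powr \<beta>)\<^sup>2" by (simp only: abs_le_square_iff)
      have "(real n * \<delta>)\<^sup>2 \<le> m\<^sup>2" using mpos n \<delta> by (intro power_mono) auto
      moreover have "0 < (real n * \<delta>)\<^sup>2" using n \<delta> by simp
      moreover have "0 < m\<^sup>2" using mp by simp
      ultimately have 2: "2 * S\<^sup>2 / m\<^sup>2 \<le> 2 * S\<^sup>2 / (real n * \<delta>)\<^sup>2"
        by (intro divide_left_mono) (auto intro: mult_pos_pos)
      show ?thesis using 1 2 by linarith
    qed
    also have "\<dots> \<le> 2 * C\<^sup>2 * (h powr \<beta>)\<^sup>2 + 2 / (real n * \<delta>)\<^sup>2 * S\<^sup>2 + C\<^sup>2 * indicator {..\<delta>} (B_hat n h \<omega> x)"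
    proof -
      have "0 \<le> C\<^sup>2 * (indicator {..\<delta>} (B_hat n h \<omega> x) :: real)" by simp
      moreover have "2 * (C * h powr \<beta>)\<^sup>2 = 2 * C\<^sup>2 * (h powr \<beta>)\<^sup>2" by (simp only: power_mult_distrib mult.assoc)
      moreover have "2 * S\<^sup>2 / (real n * \<delta>)\<^sup>2 = 2 / (real n * \<delta>)\<^sup>2 * S\<^sup>2" by simp
      ultimately show ?thesis by linarith
    qed
    finally show ?thesis unfolding S_def K_def .
  next
    case False
    then have "g_hat n h \<delta> g \<omega> x = 0" by (simp add: g_hat_def)
    then have "(g_hat n h \<delta> g \<omega> x - g x)\<^sup>2 = C\<^sup>2 * indicator {..\<delta>} (B_hat n h \<omega> x) - (C\<^sup>2 - (g x)\<^sup>2)"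
      using False by simp
    also have "\<dots> \<le> 2 * C\<^sup>2 * (h powr \<beta>)\<^sup>2 + 2 / (real n * \<delta>)\<^sup>2 * S\<^sup>2 + C\<^sup>2 * indicator {..\<delta>} (B_hat n h \<omega> x)"
      using gx nn1 nn2 by linarith
    finally show ?thesis unfolding S_def K_def .
  qed
qed


lemma inner_bound:
  fixes Q :: "('a::polish_space \<times> real) measure" and g :: "'a \<Rightarrow> real"
  assumes Q: "prob_space Q" and Qs: "sets Q = sets borel"
    and sq: "integrable Q (\<lambda>z. (snd z)\<^sup>2)"
    and mean: "AE z in Q. real_cond_exp Q (vimage_algebra (space Q) fst borel) snd z = 0"
    and var: "AE z in Q. real_cond_exp Q (vimage_algebra (space Q) fst borel) (\<lambda>z. (snd z)\<^sup>2) z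
          - (real_cond_exp Q (vimage_algebra (space Q) fst borel) snd z)\<^sup>2 \<le> cv"
    and n: "n > 0" and h: "h > 0" and \<delta>: "\<delta> > 0" and \<beta>: "\<beta> > 0" and C: "C > 0"
    and x: "x \<in> Y" and QY: "AE z in Q. fst z \<in> Y"
    and gb: "\<forall>y\<in>Y. \<bar>g y\<bar> \<le> C" and gh: "\<forall>y\<in>Y. \<forall>z\<in>Y. \<bar>g y - g z\<bar> \<le> C * dist y z powr \<beta>"
  shows "(\<integral>\<^sup>+ \<omega>. ennreal ((g_hat n h \<delta> g \<omega> x - g x)\<^sup>2) \<partial>PiM {..<n} (\<lambda>_. Q))
     \<le> ennreal (2 * C\<^sup>2 * (h powr \<beta>)\<^sup>2 + 2 * max cv 0 / (real n * \<delta>\<^sup>2)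
          + C\<^sup>2 * (if (\<integral>z. indicator (ball x h) (fst z) \<partial>Q) \<ge> 2 * \<delta> then 2 / (real n * \<delta>) else 1))"
proof -
  interpret Q: prob_space Q by fact
  define P where "P = PiM {..<n} (\<lambda>_. Q)"
  interpret P: prob_space P unfolding P_def by (rule prob_space_PiM) (rule Q)
  note meas[measurable] = fst_snd_meas[OF Qs]
  define I where "I z = (indicator (ball x h) (fst z) :: real)" for z :: "'a \<times> real"
  define p where "p = (\<integral>z. I z \<partial>Q)"
  have ballm[measurable]: "ball x h \<in> sets borel" by simp
  have Im[measurable]: "I \<in> borel_measurable Q" unfolding I_def by measurable
  have I01: "I z = 0 \<or> I z = 1" for z by (simp add: I_def indicator_def)
  have Ib: "\<bar>I z\<bar> \<le> 1" "0 \<le> I z" "I z \<le> 1" for z by (simp_all add: I_def indicator_def)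
  have Iint: "integrable Q I"
    by (rule Bochner_Integration.integrable_bound[of _ "\<lambda>_. 1::real"]) (auto simp: Ib)
  have p01: "0 \<le> p" "p \<le> 1"
  proof -
    show "0 \<le> p" unfolding p_def by (rule Bochner_Integration.integral_nonneg) (simp add: Ib)
    have "p \<le> (\<integral>z. 1 \<partial>Q)" unfolding p_def by (rule integral_mono[OF Iint]) (auto simp: Ib)
    then show "p \<le> 1" by (simp add: Q.prob_space)
  qed
  have sqI: "(snd z)\<^sup>2 * (I z)\<^sup>2 \<le> (snd z)\<^sup>2" for z
    using I01[of z] by auto
  define f1 where "f1 z = snd z * I z" for z
  define f2 where "f2 z = I z - p" for z
  have f1m: "f1 \<in> borel_measurable Q" unfolding f1_def by measurable
  have f2m: "f2 \<in> borel_measurable Q" unfolding f2_def by measurable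
  have f1sq: "integrable Q (\<lambda>z. (f1 z)\<^sup>2)"
    by (rule Bochner_Integration.integrable_bound[OF sq])
       (use f1m in \<open>auto simp: f1_def power_mult_distrib sqI\<close>)
  have f10: "(\<integral>z. f1 z \<partial>Q) = 0"
    unfolding f1_def I_def
    by (rule noise_facts(1)[OF Q Qs sq mean var]) (auto simp: indicator_def)
  have sndcv: "(\<integral>z. (snd z)\<^sup>2 \<partial>Q) \<le> cv"
    by (rule noise_facts(2)[OF Q Qs sq mean var, of "\<lambda>_. 0"]) auto
  have f1cv: "(\<integral>z. (f1 z)\<^sup>2 \<partial>Q) \<le> max cv 0"
  proof -
    have "(\<integral>z. (f1 z)\<^sup>2 \<partial>Q) \<le> (\<integral>z. (snd z)\<^sup>2 \<partial>Q)"
      by (rule integral_mono[OF f1sq sq]) (auto simp: f1_def power_mult_distrib sqI)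
    then show ?thesis using sndcv by linarith
  qed
  have f2b: "(I z - p)\<^sup>2 \<le> 1" for z
  proof -
    have "\<bar>I z - p\<bar> \<le> 1" using I01[of z] p01 by auto
    then show ?thesis by (metis abs_le_square_iff abs_one one_power2)
  qed
  have f2sq: "integrable Q (\<lambda>z. (f2 z)\<^sup>2)"
    by (rule Bochner_Integration.integrable_bound[of _ "\<lambda>_. 1::real"]) (use f2m in \<open>auto simp: f2_def f2b\<close>)
  have f20: "(\<integral>z. f2 z \<partial>Q) = 0"
    unfolding f2_def using Iint by (simp add: p_def Q.prob_space)
  have f2p: "(\<integral>z. (f2 z)\<^sup>2 \<partial>Q) \<le> p"
  proof -
    have "(\<lambda>z. (f2 z)\<^sup>2) = (\<lambda>z. (1 - 2 * p) * I z + p\<^sup>2)"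
      by (rule ext) (use I01 in \<open>auto simp: f2_def power2_eq_square algebra_simps\<close>)
    then have "(\<integral>z. (f2 z)\<^sup>2 \<partial>Q) = (1 - 2 * p) * p + p\<^sup>2"
      using Iint by (simp add: p_def Q.prob_space)
    then show ?thesis using p01 by (simp add: power2_eq_square algebra_simps) (smt (verit) mult_nonneg_nonneg)
  qed
  note S1 = sum_sq_PiM[OF Q f1m f1sq f10, of n, folded P_def]
  note S2 = sum_sq_PiM[OF Q f2m f2sq f20, of n, folded P_def]
  define a where "a = 2 * C\<^sup>2 * (h powr \<beta>)\<^sup>2"
  define b where "b = 2 / (real n * \<delta>)\<^sup>2"
  define c where "c = (if p \<ge> 2 * \<delta> then 4 / p\<^sup>2 / (real n)\<^sup>2 else 0)"
  define c0 where "c0 = (if p \<ge> 2 * \<delta> then 0 else 1::real)"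
  define \<Phi> where "\<Phi> \<omega> = a + b * (\<Sum>j<n. f1 (\<omega> j))\<^sup>2 + C\<^sup>2 * (c * (\<Sum>j<n. f2 (\<omega> j))\<^sup>2 + c0)" for \<omega>
  have c0nn: "c \<ge> 0" "c0 \<ge> 0" by (auto simp: c_def c0_def)
  have Phi_int: "integrable P \<Phi>"
    unfolding \<Phi>_def using S1(1) S2(1) by (intro Bochner_Integration.integrable_add Bochner_Integration.integrable_mult_right) auto
  have Phi_nn: "\<Phi> \<omega> \<ge> 0" for \<omega> unfolding \<Phi>_def a_def b_def using c0nn by (intro add_nonneg_nonneg mult_nonneg_nonneg) auto
  have Phi_val: "(\<integral>\<omega>. \<Phi> \<omega> \<partial>P) = a + b * (real n * (\<integral>z. (f1 z)\<^sup>2 \<partial>Q))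
       + C\<^sup>2 * (c * (real n * (\<integral>z. (f2 z)\<^sup>2 \<partial>Q)) + c0)"
    unfolding \<Phi>_def using S1 S2 by (simp add: P.prob_space)
  have AEY: "AE \<omega> in P. \<forall>j\<in>{..<n}. fst (\<omega> j) \<in> Y"
    unfolding P_def by (intro AE_finite_allI AE_PiM_component[where P="\<lambda>z. fst z \<in> Y"] Q QY) auto
  have pw: "AE \<omega> in P. ennreal ((g_hat n h \<delta> g \<omega> x - g x)\<^sup>2) \<le> ennreal (\<Phi> \<omega>)"
    using AEY
  proof eventually_elim
    case (elim \<omega>)
    have "(g_hat n h \<delta> g \<omega> x - g x)\<^sup>2 \<le> a + b * (\<Sum>j<n. f1 (\<omega> j))\<^sup>2
        + C\<^sup>2 * indicator {..\<delta>} (B_hat n h \<omega> x)"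
      using pointwise_bound[OF n h \<delta> \<beta> C x _ gb gh, of \<omega>] elim
      by (simp add: a_def b_def f1_def I_def)
    also have "indicator {..\<delta>} (B_hat n h \<omega> x) \<le> c * (\<Sum>j<n. f2 (\<omega> j))\<^sup>2 + c0"
    proof (cases "p \<ge> 2 * \<delta> \<and> B_hat n h \<omega> x \<le> \<delta>")
      case True
      have Bv: "B_hat n h \<omega> x - p = (\<Sum>j<n. f2 (\<omega> j)) / real n"
        using n by (simp add: B_hat_def Kh_ball[OF h] f2_def I_def sum_subtractf field_simps)
      have pp: "p > 0" using True \<delta> by linarith
      have "p / 2 \<le> \<bar>B_hat n h \<omega> x - p\<bar>" using True by linarith
      then have "(p / 2)\<^sup>2 \<le> (B_hat n h \<omega> x - p)\<^sup>2"
        using pp by (metis abs_le_square_iff abs_of_pos half_gt_zero)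
      then have "1 \<le> 4 / p\<^sup>2 * (B_hat n h \<omega> x - p)\<^sup>2"
        using pp by (simp add: field_simps power2_eq_square)
      also have "\<dots> = c * (\<Sum>j<n. f2 (\<omega> j))\<^sup>2"
        using True unfolding Bv c_def by (simp add: power_divide)
      finally show ?thesis using True c0nn by (simp add: c0_def)
    next
      case False
      then show ?thesis using c0nn by (auto simp: c0_def indicator_def)
    qed
    finally show ?case
      unfolding \<Phi>_def using C by (intro ennreal_leI) (simp add: mult_left_mono)
  qed
  have "(\<integral>\<^sup>+ \<omega>. ennreal ((g_hat n h \<delta> g \<omega> x - g x)\<^sup>2) \<partial>P) \<le> (\<integral>\<^sup>+ \<omega>. ennreal (\<Phi> \<omega>) \<partial>P)"
    by (rule nn_integral_mono_AE[OF pw])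
  also have "\<dots> = ennreal (\<integral>\<omega>. \<Phi> \<omega> \<partial>P)"
    by (rule nn_integral_eq_integral[OF Phi_int]) (simp add: Phi_nn)
  also have "\<dots> \<le> ennreal (2 * C\<^sup>2 * (h powr \<beta>)\<^sup>2 + 2 * max cv 0 / (real n * \<delta>\<^sup>2)
          + C\<^sup>2 * (if p \<ge> 2 * \<delta> then 2 / (real n * \<delta>) else 1))"
  proof (rule ennreal_leI)
    have t1: "b * (real n * (\<integral>z. (f1 z)\<^sup>2 \<partial>Q)) \<le> 2 * max cv 0 / (real n * \<delta>\<^sup>2)"
    proof -
      have "b * (real n * (\<integral>z. (f1 z)\<^sup>2 \<partial>Q)) \<le> b * (real n * max cv 0)"
        using f1cv unfolding b_def by (intro mult_left_mono) auto
      also have "\<dots> = 2 * max cv 0 / (real n * \<delta>\<^sup>2)"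
        using n \<delta> by (simp add: b_def power2_eq_square field_simps)
      finally show ?thesis .
    qed
    have t2: "c * (real n * (\<integral>z. (f2 z)\<^sup>2 \<partial>Q)) + c0 \<le> (if p \<ge> 2 * \<delta> then 2 / (real n * \<delta>) else 1)"
    proof (cases "p \<ge> 2 * \<delta>")
      case True
      then have pp: "p > 0" using \<delta> by linarith
      have "c * (real n * (\<integral>z. (f2 z)\<^sup>2 \<partial>Q)) \<le> c * (real n * p)"
        using f2p c0nn by (intro mult_left_mono) auto
      also have "\<dots> = 4 / (real n * p)"
        using True pp n by (simp add: c_def power2_eq_square field_simps)
      also have "\<dots> \<le> 2 / (real n * \<delta>)"
        using True pp n \<delta> by (simp add: field_simps)
      finally show ?thesis using True by (simp add: c0_def)
    qed (simp add: c_def c0_def)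
    show "(\<integral>\<omega>. \<Phi> \<omega> \<partial>P) \<le> 2 * C\<^sup>2 * (h powr \<beta>)\<^sup>2 + 2 * max cv 0 / (real n * \<delta>\<^sup>2)
          + C\<^sup>2 * (if p \<ge> 2 * \<delta> then 2 / (real n * \<delta>) else 1)"
      unfolding Phi_val a_def using t1 mult_left_mono[OF t2, of "C\<^sup>2"] by simp
  qed
  finally show ?thesis unfolding P_def p_def I_def .
qed


lemma outer_bound:
  fixes Q :: "('a::polish_space \<times> real) measure" and g :: "'a \<Rightarrow> real" and Cv :: "'a set"
  assumes Q: "prob_space Q" and Qs: "sets Q = sets borel"
    and sq: "integrable Q (\<lambda>z. (snd z)\<^sup>2)"
    and mean: "AE z in Q. real_cond_exp Q (vimage_algebra (space Q) fst borel) snd z = 0"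
    and var: "AE z in Q. real_cond_exp Q (vimage_algebra (space Q) fst borel) (\<lambda>z. (snd z)\<^sup>2) z
          - (real_cond_exp Q (vimage_algebra (space Q) fst borel) snd z)\<^sup>2 \<le> cv"
    and n: "n > 0" and h: "h > 0" and \<delta>: "\<delta> > 0" and \<beta>: "\<beta> > 0" and C: "C > 0"
    and Yb: "Y \<in> sets borel" and design: "measure (distr Q borel fst) Y = 1"
    and g: "g \<in> hoelder_class Y \<beta> C"
    and Cv: "finite Cv" "Y \<subseteq> (\<Union>c\<in>Cv. ball c (h / 2))"
  shows "risk n h \<delta> Q g \<le> ennreal (2 * C\<^sup>2 * (h powr \<beta>)\<^sup>2 + 2 * max cv 0 / (real n * \<delta>\<^sup>2)
      + 2 * C\<^sup>2 / (real n * \<delta>) + C\<^sup>2 * (2 * \<delta> * real (card Cv)))"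
proof -
  interpret Q: prob_space Q by fact
  note meas[measurable] = fst_snd_meas[OF Qs]
  define PX where "PX = distr Q borel fst"
  interpret PX: prob_space PX unfolding PX_def by (rule Q.prob_space_distr) simp
  have PXs[simp]: "sets PX = sets borel" "space PX = UNIV" by (simp_all add: PX_def)
  have gb: "\<forall>y\<in>Y. \<bar>g y\<bar> \<le> C" and gh: "\<forall>y\<in>Y. \<forall>z\<in>Y. \<bar>g y - g z\<bar> \<le> C * dist y z powr \<beta>"
    using g by (auto simp: hoelder_class_def)
  have AEX: "AE x in PX. x \<in> Y" using PX.AE_prob_1 design unfolding PX_def by blast
  have QY: "AE z in Q. fst z \<in> Y"
    using AE_distrD[of fst Q borel "\<lambda>x. x \<in> Y"] AEX unfolding PX_def by simp
  define p where "p x = (\<integral>z. indicator (ball x h) (fst z) \<partial>Q :: real)" for x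
  have p_eq: "p x = measure PX (ball x h)" for x
  proof -
    have "p x = (\<integral>y. indicator (ball x h) y \<partial>PX)"
      unfolding p_def PX_def by (subst integral_distr) (auto intro!: borel_measurable_indicator)
    also have "\<dots> = measure PX (ball x h)" by simp
    finally show ?thesis .
  qed
  define a0 where "a0 = 2 * C\<^sup>2 * (h powr \<beta>)\<^sup>2 + 2 * max cv 0 / (real n * \<delta>\<^sup>2) + 2 * C\<^sup>2 / (real n * \<delta>)"
  define Cv' where "Cv' = {c \<in> Cv. \<exists>x0\<in>ball c (h / 2) \<inter> Y. p x0 < 2 * \<delta>}"
  define T where "T = (\<Union>c\<in>Cv'. ball c (h / 2)) \<union> (UNIV - Y)"
  have Tm[measurable]: "T \<in> sets borel" unfolding T_def using Yb
    by (intro sets.Un sets.finite_UN) (auto simp: Cv'_def Cv)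
  have fin': "finite Cv'" using Cv by (simp add: Cv'_def)
  have pw: "AE x in PX. (\<integral>\<^sup>+ \<omega>. ennreal ((g_hat n h \<delta> g \<omega> x - g x)\<^sup>2) \<partial>PiM {..<n} (\<lambda>_. Q))
       \<le> ennreal a0 + ennreal (C\<^sup>2) * indicator T x"
    using AEX
  proof eventually_elim
    case (elim x)
    note ib = inner_bound[OF Q Qs sq mean var n h \<delta> \<beta> C elim QY gb gh, folded p_def]
    show ?case
    proof (cases "p x \<ge> 2 * \<delta>")
      case True
      have "ennreal (2 * C\<^sup>2 * (h powr \<beta>)\<^sup>2 + 2 * max cv 0 / (real n * \<delta>\<^sup>2)
          + C\<^sup>2 * (if p x \<ge> 2 * \<delta> then 2 / (real n * \<delta>) else 1)) = ennreal a0"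
        using True by (simp add: a0_def mult.commute)
      then show ?thesis using ib by (metis add.right_neutral add_increasing2 order_trans zero_le)
    next
      case False
      obtain c where c: "c \<in> Cv" "x \<in> ball c (h / 2)" using Cv(2) elim by blast
      then have "c \<in> Cv'" using False elim c unfolding Cv'_def by (intro CollectI conjI bexI[of _ x]) auto
      then have xT: "x \<in> T" using c unfolding T_def by auto
      have "ennreal (2 * C\<^sup>2 * (h powr \<beta>)\<^sup>2 + 2 * max cv 0 / (real n * \<delta>\<^sup>2)
          + C\<^sup>2 * (if p x \<ge> 2 * \<delta> then 2 / (real n * \<delta>) else 1))
          \<le> ennreal a0 + ennreal (C\<^sup>2)"
      proof -
        have a0nn: "0 \<le> a0" unfolding a0_def using n \<delta>
          by (intro add_nonneg_nonneg mult_nonneg_nonneg divide_nonneg_nonneg) auto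
        have "2 * C\<^sup>2 * (h powr \<beta>)\<^sup>2 + 2 * max cv 0 / (real n * \<delta>\<^sup>2)
          + C\<^sup>2 * (if p x \<ge> 2 * \<delta> then 2 / (real n * \<delta>) else 1) \<le> a0 + C\<^sup>2"
          using False a0nn n \<delta> unfolding a0_def by simp
        then have "ennreal (2 * C\<^sup>2 * (h powr \<beta>)\<^sup>2 + 2 * max cv 0 / (real n * \<delta>\<^sup>2)
          + C\<^sup>2 * (if p x \<ge> 2 * \<delta> then 2 / (real n * \<delta>) else 1)) \<le> ennreal (a0 + C\<^sup>2)"
          by (rule ennreal_leI)
        also have "\<dots> = ennreal a0 + ennreal (C\<^sup>2)" using a0nn by (simp add: ennreal_plus)
        finally show ?thesis .
      qed
      moreover have "ennreal (C\<^sup>2) * indicator T x = ennreal (C\<^sup>2)" using xT by simp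
      ultimately show ?thesis using ib by (simp only:)
    qed
  qed
  have "risk n h \<delta> Q g \<le> (\<integral>\<^sup>+ x. (ennreal a0 + ennreal (C\<^sup>2) * indicator T x) \<partial>PX)"
    unfolding risk_def PX_def[symmetric] by (rule nn_integral_mono_AE[OF pw])
  also have "\<dots> = ennreal a0 + ennreal (C\<^sup>2) * emeasure PX T"
  proof -
    have TPX[measurable]: "T \<in> sets PX" by simp
    have e1: "emeasure PX UNIV = 1" using PX.emeasure_space_1 by simp
    show ?thesis
      by (subst nn_integral_add) (auto simp: e1 nn_integral_cmult_indicator)
  qed
  also have "emeasure PX T \<le> ennreal (2 * \<delta> * real (card Cv))"
  proof -
    have "measure PX T \<le> (\<Sum>c\<in>Cv'. measure PX (ball c (h / 2))) + measure PX (UNIV - Y)"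
    proof -
      have "measure PX T \<le> measure PX (\<Union>c\<in>Cv'. ball c (h / 2)) + measure PX (UNIV - Y)"
        unfolding T_def by (rule measure_Un_le) (use fin' Yb in auto)
      also have "measure PX (\<Union>c\<in>Cv'. ball c (h / 2)) \<le> (\<Sum>c\<in>Cv'. measure PX (ball c (h / 2)))"
        by (rule measure_UNION_le) (use fin' in auto)
      finally show ?thesis by simp
    qed
    also have "measure PX (UNIV - Y) = 0"
      using PX.prob_compl[of Y] design Yb unfolding PX_def by simp
    also have "(\<Sum>c\<in>Cv'. measure PX (ball c (h / 2))) \<le> (\<Sum>c\<in>Cv'. 2 * \<delta>)"
    proof (rule sum_mono)
      fix c assume "c \<in> Cv'"
      then obtain x0 where x0: "x0 \<in> ball c (h / 2)" "p x0 < 2 * \<delta>" unfolding Cv'_def by auto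
      have "ball c (h / 2) \<subseteq> ball x0 h"
      proof
        fix y assume "y \<in> ball c (h / 2)"
        then have "dist x0 c < h / 2" "dist c y < h / 2" using x0(1) by (auto simp: dist_commute)
        moreover have "dist x0 y \<le> dist x0 c + dist c y" by (rule dist_triangle)
        ultimately show "y \<in> ball x0 h" by simp
      qed
      then have "measure PX (ball c (h / 2)) \<le> measure PX (ball x0 h)"
        by (intro PX.finite_measure_mono) auto
      then show "measure PX (ball c (h / 2)) \<le> 2 * \<delta>" using x0(2) p_eq by simp
    qed
    also have "(\<Sum>c\<in>Cv'. 2 * \<delta>) \<le> 2 * \<delta> * real (card Cv)"
    proof -
      have "card Cv' \<le> card Cv" using Cv by (intro card_mono) (auto simp: Cv'_def)
      then show ?thesis using \<delta> by simp
    qed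
    finally have "measure PX T \<le> 2 * \<delta> * real (card Cv)" by simp
    then show ?thesis by (simp add: PX.emeasure_eq_measure ennreal_leI)
  qed
  then have "ennreal a0 + ennreal (C\<^sup>2) * emeasure PX T \<le> ennreal a0 + ennreal (C\<^sup>2) * ennreal (2 * \<delta> * real (card Cv))"
    by (intro add_left_mono mult_left_mono) auto
  also have "\<dots> = ennreal (a0 + C\<^sup>2 * (2 * \<delta> * real (card Cv)))"
    using \<delta> n unfolding a0_def by (simp add: ennreal_mult ennreal_plus[symmetric] add_nonneg_nonneg)
  finally show ?thesis unfolding a0_def by simp
qed

lemma ev_powr_le_ln: "(a::real) < 0 \<Longrightarrow> b > 0 \<Longrightarrow> eventually (\<lambda>n. real n powr a \<le> ln (real n) powr (-b)) at_top"
  by real_asymp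

lemma ev_h_small: "d > 0 \<Longrightarrow> (g::real) > 0 \<Longrightarrow> s > 0 \<Longrightarrow> eventually (\<lambda>n. (d * ln (real n)) powr (-1/g) < s) at_top"
  by real_asymp


lemma cover_exists:
  assumes "covering_number s Y \<noteq> \<infinity>"
  shows "\<exists>Cv. finite Cv \<and> Y \<subseteq> (\<Union>c\<in>Cv. ball c s) \<and> enat (card Cv) = covering_number s Y"
proof -
  define A where "A = {enat (card C) | C. finite C \<and> Y \<subseteq> (\<Union>c\<in>C. ball c s)}"
  have cn: "covering_number s Y = Inf A" unfolding covering_number_def A_def ..
  have "A \<noteq> {}" using assms cn by (auto simp: Inf_enat_def)
  then have "Inf A \<in> A" unfolding Inf_enat_def by (auto intro: LeastI_ex)
  then show ?thesis unfolding cn A_def by auto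
qed

lemma card_bound:
  fixes Y :: "'a::metric_space set"
  assumes s: "s > 0" and fin: "covering_number s Y \<noteq> \<infinity>"
    and ub: "ln (real (the_enat (covering_number s Y))) \<le> B"
  shows "\<exists>Cv. finite Cv \<and> Y \<subseteq> (\<Union>c\<in>Cv. ball c s) \<and> real (card Cv) \<le> exp B"
proof -
  obtain Cv where Cv: "finite Cv" "Y \<subseteq> (\<Union>c\<in>Cv. ball c s)" "enat (card Cv) = covering_number s Y"
    using cover_exists[OF fin] by blast
  have "real (card Cv) \<le> exp B"
  proof (cases "card Cv = 0")
    case False
    have "ln (real (card Cv)) \<le> B" using ub Cv(3)[symmetric] by simp
    then have "exp (ln (real (card Cv))) \<le> exp B" by simp
    then show ?thesis using False by simp
  qed simp
  then show ?thesis using Cv by blast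
qed


theorem theorem1:
  fixes Y :: "'a::polish_space set"
    and s0 c0 c1 \<gamma> C \<beta> cv \<eta> d :: real
    and Q :: "nat \<Rightarrow> ('a \<times> real) measure"
  assumes Y_borel: "Y \<in> sets borel"
    and s0: "s0 > 0" and c0: "0 < c0" and c01: "c0 < c1" and \<gamma>: "\<gamma> > 0"
    and entropy: "\<forall>s\<in>{0<..<s0}. covering_number s Y \<noteq> \<infinity> \<and>
        c0 * s powr (-\<gamma>) \<le> ln (real (the_enat (covering_number s Y))) \<and>
        ln (real (the_enat (covering_number s Y))) \<le> c1 * s powr (-\<gamma>)"
    and C: "C > 0" and \<beta>: "0 < \<beta>" "\<beta> \<le> 1"
    and \<eta>: "0 < \<eta>" "\<eta> < 1/2"
    and d: "0 < d" "d < \<eta> * inverse c1 * 4 powr (-\<gamma>)"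
    and Q_prob: "\<And>n. prob_space (Q n)"
    and Q_sets: "\<And>n. sets (Q n) = sets borel"
    and design: "\<And>n. measure (distr (Q n) borel fst) Y = 1"
    and noise_sq_int: "\<And>n. integrable (Q n) (\<lambda>z. (snd z)\<^sup>2)"
    and noise_mean: "\<And>n. AE z in Q n.
        real_cond_exp (Q n) (vimage_algebra (space (Q n)) fst borel) snd z = 0"
    and noise_var: "\<And>n. AE z in Q n.
        real_cond_exp (Q n) (vimage_algebra (space (Q n)) fst borel) (\<lambda>z. (snd z)\<^sup>2) z
          - (real_cond_exp (Q n) (vimage_algebra (space (Q n)) fst borel) snd z)\<^sup>2 \<le> cv"
  shows "\<exists>M. \<forall>\<^sub>F n in sequentially.
     (SUP g\<in>hoelder_class Y \<beta> C.
        risk n ((d * ln (real n)) powr (-1/\<gamma>)) (real n powr (-\<eta>)) (Q n) g)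
       \<le> ennreal (M * ln (real n) powr (-2 * \<beta> / \<gamma>))"
proof -
  have c1: "c1 > 0" using c0 c01 by linarith
  define e where "e = c1 * 2 powr \<gamma> * d"
  have e_lt: "e < \<eta>"
  proof -
    have "2 powr \<gamma> \<le> 4 powr \<gamma>" using \<gamma> by (intro powr_mono2) auto
    then have q: "2 powr \<gamma> * 4 powr (-\<gamma>) \<le> 1" by (simp add: powr_minus divide_le_eq flip: divide_inverse)
    have "e < c1 * 2 powr \<gamma> * (\<eta> * inverse c1 * 4 powr (-\<gamma>))"
      unfolding e_def using d c1 by (intro mult_strict_left_mono) auto
    also have "\<dots> = \<eta> * (2 powr \<gamma> * 4 powr (-\<gamma>))" using c1 by (simp add: field_simps)
    also have "\<dots> \<le> \<eta>" using q \<eta> by (simp add: mult_left_le)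
    finally show ?thesis .
  qed
  define L where "L n = ln (real n) powr (-2 * \<beta> / \<gamma>)" for n :: nat
  define M where "M = 2 * C\<^sup>2 * d powr (-2 * \<beta> / \<gamma>) + 2 * max cv 0 + 4 * C\<^sup>2"
  have b0: "2 * \<beta> / \<gamma> > 0" using \<beta> \<gamma> by simp
  have ev: "\<forall>\<^sub>F n in sequentially. n \<ge> 3 \<and> (d * ln (real n)) powr (-1/\<gamma>) < 2 * s0
      \<and> real n powr (2 * \<eta> - 1) \<le> L n \<and> real n powr (\<eta> - 1) \<le> L n \<and> real n powr (e - \<eta>) \<le> L n"
  proof -
    have e1: "\<forall>\<^sub>F n in sequentially. n \<ge> (3::nat)" by (rule eventually_ge_at_top)
    have e2: "\<forall>\<^sub>F n in sequentially. (d * ln (real n)) powr (-1/\<gamma>) < 2 * s0"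
      using ev_h_small[OF d(1) \<gamma>, of "2 * s0"] s0 by simp
    have e3: "\<forall>\<^sub>F n in sequentially. real n powr (2 * \<eta> - 1) \<le> L n"
      unfolding L_def using ev_powr_le_ln[of "2 * \<eta> - 1" "2 * \<beta> / \<gamma>"] b0 \<eta> by simp
    have e4: "\<forall>\<^sub>F n in sequentially. real n powr (\<eta> - 1) \<le> L n"
      unfolding L_def using ev_powr_le_ln[of "\<eta> - 1" "2 * \<beta> / \<gamma>"] b0 \<eta> by simp
    have e5: "\<forall>\<^sub>F n in sequentially. real n powr (e - \<eta>) \<le> L n"
      unfolding L_def using ev_powr_le_ln[of "e - \<eta>" "2 * \<beta> / \<gamma>"] b0 e_lt by simp
    show ?thesis by (intro eventually_conj e1 e2 e3 e4 e5)
  qed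
  show ?thesis
  proof (rule exI[of _ M], use ev in \<open>eventually_elim\<close>)
    case (elim n)
    then have n3: "n \<ge> 3" by simp
    have n0: "n > 0" using n3 by simp
    have rn: "real n > 0" using n0 by simp
    have ln1: "ln (real n) > 0" using n3 by simp
    define h where "h = (d * ln (real n)) powr (-1/\<gamma>)"
    define \<delta> where "\<delta> = real n powr (-\<eta>)"
    have dl: "d * ln (real n) > 0" using d ln1 by simp
    have h0: "h > 0" unfolding h_def using dl d ln1 by simp
    have \<delta>0: "\<delta> > 0" unfolding \<delta>_def using rn by simp
    have hs: "h / 2 \<in> {0<..<s0}" using elim h0 unfolding h_def by auto
    have hg: "h powr (-\<gamma>) = d * ln (real n)"
      unfolding h_def using dl \<gamma> by (simp add: powr_powr)
    have hh: "(h / 2) powr (-\<gamma>) = 2 powr \<gamma> * (d * ln (real n))"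
      using h0 by (simp add: powr_divide powr_minus hg[symmetric] divide_simps)
    obtain Cv where Cv: "finite Cv" "Y \<subseteq> (\<Union>c\<in>Cv. ball c (h / 2))"
      "real (card Cv) \<le> exp (c1 * (h / 2) powr (-\<gamma>))"
      using card_bound[of "h / 2" Y "c1 * (h / 2) powr (-\<gamma>)"] entropy hs by auto
    have card: "real (card Cv) \<le> real n powr e"
    proof -
      have "exp (c1 * (h / 2) powr (-\<gamma>)) = exp (e * ln (real n))"
        unfolding hh e_def by (simp add: algebra_simps)
      also have "\<dots> = real n powr e" using rn by (simp add: powr_def)
      finally show ?thesis using Cv(3) by simp
    qed
    have t1: "(h powr \<beta>)\<^sup>2 = d powr (-2 * \<beta> / \<gamma>) * L n"
    proof -
      have "(h powr \<beta>)\<^sup>2 = h powr (\<beta> + \<beta>)" by (simp only: power2_eq_square powr_add)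
      also have "\<dots> = (d * ln (real n)) powr (-1/\<gamma> * (\<beta> + \<beta>))"
        unfolding h_def by (simp add: powr_powr)
      also have "\<dots> = (d * ln (real n)) powr (-2 * \<beta> / \<gamma>)" by (simp add: field_simps)
      also have "\<dots> = d powr (-2 * \<beta> / \<gamma>) * L n"
        unfolding L_def using d ln1 by (simp add: powr_mult)
      finally show ?thesis .
    qed
    have sq\<eta>: "(real n powr \<eta>)\<^sup>2 = real n powr (\<eta> * 2)"
      by (simp only: power2_eq_square powr_add[symmetric] mult_2_right)
    have t2: "1 / (real n * \<delta>\<^sup>2) = real n powr (2 * \<eta> - 1)"
      unfolding \<delta>_def using rn sq\<eta> by (simp add: powr_power[symmetric] powr_diff powr_minus field_simps powr_mult_base)
    have t3: "1 / (real n * \<delta>) = real n powr (\<eta> - 1)"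
      unfolding \<delta>_def using rn by (simp add: powr_diff powr_minus field_simps)
    have t4: "\<delta> * real (card Cv) \<le> real n powr (e - \<eta>)"
    proof -
      have "\<delta> * real (card Cv) \<le> \<delta> * real n powr e" using card \<delta>0 by simp
      also have "\<dots> = real n powr (e - \<eta>)" unfolding \<delta>_def by (simp add: powr_diff powr_minus field_simps)
      finally show ?thesis .
    qed
    have Lnn: "L n \<ge> 0" unfolding L_def by simp
    have bound: "risk n h \<delta> (Q n) g \<le> ennreal (M * L n)" if g: "g \<in> hoelder_class Y \<beta> C" for g
    proof -
      note ob = outer_bound[OF Q_prob Q_sets noise_sq_int noise_mean noise_var n0 h0 \<delta>0 \<beta>(1) C
          Y_borel design g Cv(1,2)]
      have "2 * C\<^sup>2 * (h powr \<beta>)\<^sup>2 + 2 * max cv 0 / (real n * \<delta>\<^sup>2)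
        + 2 * C\<^sup>2 / (real n * \<delta>) + C\<^sup>2 * (2 * \<delta> * real (card Cv)) \<le> M * L n"
      proof -
        have a: "2 * C\<^sup>2 * (h powr \<beta>)\<^sup>2 = 2 * C\<^sup>2 * d powr (-2 * \<beta> / \<gamma>) * L n" by (simp add: t1)
        have b: "2 * max cv 0 / (real n * \<delta>\<^sup>2) \<le> 2 * max cv 0 * L n"
        proof -
          have "2 * max cv 0 / (real n * \<delta>\<^sup>2) = 2 * max cv 0 * (1 / (real n * \<delta>\<^sup>2))" by simp
          also have "\<dots> \<le> 2 * max cv 0 * L n" unfolding t2 using elim by (intro mult_left_mono) auto
          finally show ?thesis .
        qed
        have c: "2 * C\<^sup>2 / (real n * \<delta>) \<le> 2 * C\<^sup>2 * L n"
        proof -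
          have "2 * C\<^sup>2 / (real n * \<delta>) = 2 * C\<^sup>2 * (1 / (real n * \<delta>))" by simp
          also have "\<dots> \<le> 2 * C\<^sup>2 * L n" unfolding t3 using elim by (intro mult_left_mono) auto
          finally show ?thesis .
        qed
        have dd: "C\<^sup>2 * (2 * \<delta> * real (card Cv)) \<le> 2 * C\<^sup>2 * L n"
        proof -
          have "C\<^sup>2 * (2 * \<delta> * real (card Cv)) = 2 * C\<^sup>2 * (\<delta> * real (card Cv))" by simp
          also have "\<dots> \<le> 2 * C\<^sup>2 * L n" using t4 elim by (intro mult_left_mono) auto
          finally show ?thesis .
        qed
        have "M * L n = 2 * C\<^sup>2 * d powr (-2 * \<beta> / \<gamma>) * L n + 2 * max cv 0 * L n
            + 2 * C\<^sup>2 * L n + 2 * C\<^sup>2 * L n" unfolding M_def by (simp add: algebra_simps)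
        then show ?thesis using a b c dd by linarith
      qed
      then show ?thesis using ob by (meson ennreal_leI order_trans)
    qed
    show ?case unfolding h_def[symmetric] \<delta>_def[symmetric] L_def[symmetric]
      by (rule SUP_least) (rule bound)
  qed
qed
end
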